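(* Let $n,t,k$ be integers with $n\geq 2t\geq 4$ and $k\geq 2$. Then $A_k(n,0^t)\leq \beta_k(t)^n$, where $\beta_k(t)=k-(k-1)k^{-t-1}$.
   Context: Words are over $\Sigma_k=\{0,1,\ldots,k-1\}$, and $0^t$ is the word consisting of $t$ zeros. $A_k(m,v)$ denotes the number of words of length $m$ over $\Sigma_k$ that do not contain $v$ as a factor. *)

theory Defs
  imports Complex_Main
begin

definition is_factor :: "'a list \<Rightarrow> 'a list \<Rightarrow> bool" where
  "is_factor v w \<longleftrightarrow> (\<exists>x y. w = x @ v @ y)"

definition words :: "nat \<Rightarrow> nat \<Rightarrow> nat list set" where
  "words k m = {w. length w = m \<and> set w \<subseteq> {0..<k}}"

definition avoid_count :: "nat \<Rightarrow> nat \<Rightarrow> nat list \<Rightarrow> nat" where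
  "avoid_count k m v = card {w \<in> words k m. \<not> is_factor v w}"

definition beta :: "nat \<Rightarrow> nat \<Rightarrow> real" where
  "beta k t = real k - (real k - 1) * (real k) powi (- int t - 1)"

end

theory Submission
  imports Defs
begin

definition zf :: "nat \<Rightarrow> nat list \<Rightarrow> bool" where
  "zf t w \<longleftrightarrow> (\<exists>i. i + t \<le> length w \<and> (\<forall>j<t. w!(i+j) = 0))"

definition AS :: "nat \<Rightarrow> nat \<Rightarrow> nat \<Rightarrow> nat list set" where
  "AS k t m = {w \<in> words k m. \<not> zf t w}"

lemma factor_zf: "is_factor (replicate t 0) w \<longleftrightarrow> zf t w"
proof
  assume "is_factor (replicate t 0) w"
  then obtain x y where w: "w = x @ replicate t 0 @ y" by (auto simp: is_factor_def)
  show "zf t w" unfolding zf_def by (rule exI[of _ "length x"]) (auto simp: w nth_append)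
next
  assume "zf t w"
  then obtain i where i: "i + t \<le> length w" "\<forall>j<t. w!(i+j) = 0" by (auto simp: zf_def)
  have 1: "take t (drop i w) = replicate t 0" by (rule nth_equalityI) (use i in auto)
  have "w = take i w @ take t (drop i w) @ drop t (drop i w)" by (metis append_take_drop_id)
  then have "w = take i w @ replicate t 0 @ drop t (drop i w)" using 1 by simp
  then show "is_factor (replicate t 0) w" unfolding is_factor_def by blast
qed

lemma words_alt: "words k m = {xs. set xs \<subseteq> {0..<k} \<and> length xs = m}"
  by (auto simp: words_def)

lemma finite_words: "finite (words k m)"
  unfolding words_alt by (rule finite_lists_length_eq) simp

lemma card_words: "card (words k m) = k ^ m"
  unfolding words_alt by (subst card_lists_length_eq) auto

lemma finite_AS: "finite (AS k t m)"
  using finite_words unfolding AS_def by simp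

lemma card_AS_le: "card (AS k t m) \<le> k ^ m"
proof -
  have "card (AS k t m) \<le> card (words k m)"
    by (rule card_mono[OF finite_words]) (auto simp: AS_def)
  then show ?thesis by (simp add: card_words)
qed

lemma zf_take: "zf t (take p w) \<Longrightarrow> zf t w"
  unfolding zf_def by (metis (no_types, lifting) add_lessD1 dual_order.trans length_take min.bounded_iff nth_take add.assoc nat_add_left_cancel_less order_le_less_trans le_eq_less_or_eq)

lemma zf_butlast: "zf t (butlast w) \<Longrightarrow> zf t w"
  by (metis butlast_conv_take zf_take)

lemma fiber: "card (AS k t (p + t)) \<le> k ^ t * card (AS k t p)"
proof -
  have sub: "AS k t (p + t) \<subseteq> (\<lambda>(u,z). u @ z) ` (AS k t p \<times> words k t)"
  proof
    fix w assume w: "w \<in> AS k t (p + t)"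
    have "take p w \<in> AS k t p" using w zf_take[of t p w]
      by (auto simp: AS_def words_def dest: in_set_takeD)
    moreover have "drop p w \<in> words k t" using w
      by (auto simp: AS_def words_def dest: in_set_dropD)
    ultimately show "w \<in> (\<lambda>(u,z). u @ z) ` (AS k t p \<times> words k t)"
      by (intro image_eqI[of _ _ "(take p w, drop p w)"]) auto
  qed
  have "card (AS k t (p + t)) \<le> card ((\<lambda>(u,z). u @ z) ` (AS k t p \<times> words k t))"
    by (rule card_mono[OF _ sub]) (simp add: finite_AS finite_words)
  also have "\<dots> \<le> card (AS k t p \<times> words k t)" by (rule card_image_le) (simp add: finite_AS finite_words)
  also have "\<dots> = k ^ t * card (AS k t p)" by (simp add: card_cartesian_product card_words)
  finally show ?thesis .
qed

lemma recur:
  assumes "t \<ge> 1" "k \<ge> 1"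
  shows "card (AS k t (p + t + 1)) + (k - 1) * card (AS k t p) \<le> k * card (AS k t (p + t))"
proof -
  define C where "C = (\<lambda>(w,c). w @ [c]) ` (AS k t (p + t) \<times> {0..<k})"
  define B where "B = (\<lambda>(v,c). v @ [c] @ replicate t 0) ` (AS k t p \<times> {1..<k})"
  have finC: "finite C" unfolding C_def using finite_AS by simp
  have cardC: "card C \<le> k * card (AS k t (p + t))"
  proof -
    have "card C \<le> card (AS k t (p + t) \<times> {0..<k})" unfolding C_def
      by (rule card_image_le) (simp add: finite_AS)
    then show ?thesis by (simp add: card_cartesian_product mult.commute)
  qed
  have inj: "inj_on (\<lambda>(v,c). v @ [c] @ replicate t (0::nat)) (AS k t p \<times> {1..<k})"
  proof (rule inj_onI, clarify)
    fix v c v' c' assume v: "v \<in> AS k t p" "v' \<in> AS k t p"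
      and e: "v @ [c] @ replicate t (0::nat) = v' @ [c'] @ replicate t 0"
    have l: "length v = p" "length v' = p" using v by (auto simp: AS_def words_def)
    have "take p (v @ [c] @ replicate t (0::nat)) = take p (v' @ [c'] @ replicate t 0)" using e by simp
    then have "v = v'" using l by simp
    moreover have "c = c'" using e calculation by simp
    ultimately show "v = v' \<and> c = c'" by simp
  qed
  have cardB: "card B = (k - 1) * card (AS k t p)"
  proof -
    have "card B = card (AS k t p \<times> {1..<k})" unfolding B_def by (rule card_image[OF inj])
    then show ?thesis by (simp add: card_cartesian_product mult.commute)
  qed
  have AC: "AS k t (p + t + 1) \<subseteq> C"
  proof
    fix w assume w: "w \<in> AS k t (p + t + 1)"
    then have ne: "w \<noteq> []" and lw: "length w = p + t + 1" and sw: "set w \<subseteq> {0..<k}"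
      and nz: "\<not> zf t w"
      by (auto simp: AS_def words_def)
    have "butlast w \<in> AS k t (p + t)" using lw sw nz zf_butlast[of t w]
      by (auto simp: AS_def words_def dest: in_set_butlastD)
    moreover have "last w \<in> {0..<k}" using ne sw last_in_set by blast
    moreover have "w = butlast w @ [last w]" using ne by simp
    ultimately show "w \<in> C" unfolding C_def by (intro image_eqI[of _ _ "(butlast w, last w)"]) auto
  qed
  have BC: "B \<subseteq> C"
  proof
    fix x assume "x \<in> B"
    then obtain v c where v: "v \<in> AS k t p" and c: "c \<in> {1..<k}" and x: "x = v @ [c] @ replicate t 0"
      unfolding B_def by auto
    have lv: "length v = p" and sv: "set v \<subseteq> {0..<k}" and nv: "\<not> zf t v" using v by (auto simp: AS_def words_def)
    define u where "u = v @ [c] @ replicate (t - 1) 0"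
    have xu: "x = u @ [0]" unfolding x u_def using assms(1)
      by (metis append.assoc replicate_Suc replicate_append_same Suc_diff_le diff_Suc_1 append_Cons append_Nil)
    have "\<not> zf t u"
    proof
      assume "zf t u"
      then obtain i where i: "i + t \<le> length u" "\<forall>j<t. u!(i+j) = 0" by (auto simp: zf_def)
      have lu: "length u = p + t" unfolding u_def using lv assms(1) by simp
      show False
      proof (cases "i + t \<le> p")
        case True
        have "zf t v" unfolding zf_def
        proof (intro exI[of _ i] conjI allI impI)
          show "i + t \<le> length v" using True lv by simp
          fix j assume j: "j < t"
          have "u!(i+j) = v!(i+j)" unfolding u_def using True j lv by (simp add: nth_append)
          then show "v!(i+j) = 0" using i j by simp
        qed
        then show False using nv by simp
      next
        case False
        then have "i \<le> p" using i lu by simp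
        have "p - i < t" using False \<open>i \<le> p\<close> by arith
        then have "u!(i + (p - i)) = 0" using i(2) by blast
        moreover have "u!p = c" unfolding u_def using lv by (simp add: nth_append)
        ultimately show False using c \<open>i \<le> p\<close> by simp
      qed
    qed
    moreover have "u \<in> words k (p + t)" unfolding u_def words_def using lv sv c assms by auto
    ultimately have "u \<in> AS k t (p + t)" by (simp add: AS_def)
    moreover have "(0::nat) \<in> {0..<k}" using assms by simp
    ultimately show "x \<in> C" unfolding C_def xu by (intro image_eqI[of _ _ "(u, 0)"]) auto
  qed
  have disj: "AS k t (p + t + 1) \<inter> B = {}"
  proof (rule ccontr)
    assume "AS k t (p + t + 1) \<inter> B \<noteq> {}"
    then obtain x where xa: "x \<in> AS k t (p + t + 1)" and "x \<in> B" by blast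
    then obtain v c where v: "v \<in> AS k t p" and x: "x = v @ [c] @ replicate t 0"
      unfolding B_def by auto
    have lv: "length v = p" using v by (auto simp: AS_def words_def)
    have "zf t x" unfolding zf_def x
      by (rule exI[of _ "p + 1"]) (auto simp: lv nth_append)
    then show False using xa by (simp add: AS_def)
  qed
  have "card (AS k t (p + t + 1)) + card B = card (AS k t (p + t + 1) \<union> B)"
    using disj finite_subset[OF AC finC] finite_subset[OF BC finC] by (simp add: card_Un_disjoint)
  also have "\<dots> \<le> card C" by (rule card_mono[OF finC]) (use AC BC in auto)
  finally show ?thesis using cardB cardC by simp
qed

lemma real_step:
  assumes "t \<ge> 1" "k \<ge> 1"
  shows "real (card (AS k t (p + t + 1))) \<le> (real k - (real k - 1) / real k ^ t) * real (card (AS k t (p + t)))"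
proof -
  let ?a = "real (card (AS k t (p + t + 1)))" and ?b = "real (card (AS k t (p + t)))"
    and ?c = "real (card (AS k t p))"
  have "real (card (AS k t (p + t + 1)) + (k - 1) * card (AS k t p)) \<le> real (k * card (AS k t (p + t)))"
    using recur[OF assms, of p] by (simp only: of_nat_le_iff)
  then have r: "?a + (real k - 1) * ?c \<le> real k * ?b"
    using assms by (simp add: of_nat_diff)
  have f: "?b \<le> real k ^ t * ?c" using fiber[of k t p] by (simp flip: of_nat_mult of_nat_power)
  have kp: "real k ^ t > 0" using assms by simp
  have "?b / real k ^ t \<le> ?c" using f kp by (simp add: divide_le_eq mult.commute)
  then have "(real k - 1) * (?b / real k ^ t) \<le> (real k - 1) * ?c"
    using assms by (intro mult_left_mono) auto
  then show ?thesis using r by (simp add: algebra_simps)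
qed

lemma real_iter:
  assumes "t \<ge> 1" "k \<ge> 1"
  shows "real (card (AS k t (t + j))) \<le> (real k - (real k - 1) / real k ^ t) ^ j * real k ^ t"
proof (induction j)
  case 0
  then show ?case using card_AS_le[of k t t] by (simp flip: of_nat_power)
next
  case (Suc j)
  let ?g = "real k - (real k - 1) / real k ^ t"
  have g0: "?g \<ge> 0"
  proof -
    have p1: "real k ^ t \<ge> 1" using assms by (simp add: one_le_power)
    have "(real k - 1) * 1 \<le> (real k - 1) * real k ^ t" using assms p1 by (intro mult_left_mono) auto
    then have "(real k - 1) / real k ^ t \<le> real k - 1" using p1 assms by (simp add: divide_le_eq)
    then show ?thesis by simp
  qed
  have "real (card (AS k t (t + Suc j))) \<le> ?g * real (card (AS k t (j + t)))"
    using real_step[OF assms, of j] by (simp add: add.commute add.left_commute)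
  also have "\<dots> \<le> ?g * (?g ^ j * real k ^ t)" using Suc g0 by (simp add: add.commute mult_left_mono)
  finally show ?case by simp
qed

theorem lemma14:
  fixes n t k :: nat
  assumes "n \<ge> 2 * t" and "2 * t \<ge> 4" and "k \<ge> 2"
  shows "real (avoid_count k n (replicate t 0)) \<le> beta k t ^ n"
proof -
  have t1: "t \<ge> 1" and k1: "k \<ge> 1" using assms by auto
  define j where "j = n - t"
  have n: "n = t + j" and jt: "j \<ge> t" using assms unfolding j_def by auto
  define e where "e = (real k - 1) / real k ^ t"
  define g where "g = real k - e"
  have kr: "real k \<ge> 2" using assms by simp
  have e0: "e \<ge> 0" unfolding e_def using kr by simp
  have e1: "e \<le> (real k - 1) / real k"
    unfolding e_def using kr t1
    by (intro divide_left_mono) (auto simp: power_increasing[of 1 t "real k", simplified])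
  have "(real k - 1) / real k \<le> 1" using kr by (simp add: divide_le_eq)
  then have e1': "e \<le> 1" using e1 by linarith
  have beta: "beta k t = real k - e / real k"
  proof -
    have "real k powi (- int t - 1) = inverse (real k ^ (t + 1))"
      by (simp add: power_int_def nat_add_distrib power_inverse)
    then show ?thesis unfolding beta_def e_def using kr by (simp add: field_simps)
  qed
  have g0: "g \<ge> 0" unfolding g_def using e1' kr by simp
  have "e / real k \<le> e / 1" using e0 kr by (intro divide_left_mono) auto
  then have bg: "beta k t \<ge> g" unfolding beta g_def by simp
  have bsq: "beta k t ^ 2 \<ge> real k * g"
  proof -
    have "beta k t ^ 2 - real k * g = (real k - 2) * e + (e / real k) ^ 2"
      unfolding beta g_def using kr by (simp add: power2_eq_square field_simps)
    moreover have "(real k - 2) * e \<ge> 0" using kr e0 by simp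
    ultimately show ?thesis by (smt (verit) zero_le_power2)
  qed
  have cnt: "avoid_count k n (replicate t 0) = card (AS k t n)"
    unfolding avoid_count_def AS_def factor_zf by simp
  have "real (card (AS k t n)) \<le> g ^ j * real k ^ t"
    using real_iter[OF t1 k1, of j] unfolding n g_def e_def by simp
  also have "\<dots> = (real k * g) ^ t * g ^ (j - t)"
  proof -
    have "g ^ j = g ^ t * g ^ (j - t)" using jt by (metis le_add_diff_inverse power_add)
    then show ?thesis by (simp add: power_mult_distrib algebra_simps)
  qed
  also have "\<dots> \<le> (beta k t ^ 2) ^ t * beta k t ^ (j - t)"
    using bsq bg g0 kr by (intro mult_mono power_mono) auto
  also have "\<dots> = beta k t ^ (2 * t + (j - t))"
    by (simp only: power_add power_mult)
  also have "\<dots> = beta k t ^ n"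
    using jt n by (metis add.commute le_add_diff_inverse mult_2 add.assoc)
  finally show ?thesis using cnt by simp
qed

end
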